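(* Let $n>2k$ be integers and let $A\in\mathscr F_k^5$ satisfy, for all $\alpha\in\mathscr I_{k-1}^5$, $$(n+2k-4\alpha_3-4)A_{\alpha+\vec e_3}=(n+2k-4\alpha_4-4)A_{\alpha+\vec e_4},$$ $$(n+2k-4\alpha_5-4)A_{\alpha+\vec e_5}=(n+2k-4\alpha_1-4)A_{\alpha+\vec e_1},$$ $$(n+2k-4\alpha_3-4)A_{\alpha+\vec e_3}=(n+2k-4\alpha_1-4)A_{\alpha+\vec e_1}-4(\alpha_1-\alpha_3-\alpha_4+\alpha_5)A_{\alpha+\vec e_2}.$$ Then for all $\alpha\in\mathscr I_k^5$: $$A_{\alpha_1,\alpha_2,\alpha_3,\alpha_4,\alpha_5}=A_{\alpha_1,\alpha_2,\alpha_4,\alpha_3,\alpha_5},\quad A_{\alpha_1,\alpha_2,\alpha_3,\alpha_4,\alpha_5}=A_{\alpha_5,\alpha_2,\alpha_3,\alpha_4,\alpha_1},\quad A_{\alpha_1,\alpha_2,\alpha_3,\alpha_4,\alpha_5}=A_{\alpha_3,\alpha_2,\alpha_1,\alpha_5,\alpha_4}.$$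
   Context: Notation: $\mathscr I_k^\ell:=\{\alpha\in\mathbb N_0^\ell:\alpha_1+\cdots+\alpha_\ell=k\}$; $\mathscr F_k^\ell$ is the real vector space of functions $A:\mathscr I_k^\ell\to\mathbb R$, $A_\alpha:=A(\alpha)$; $\vec e_j\in\mathbb N_0^\ell$ is the tuple with $1$ in slot $j$ and $0$ elsewhere. *)

theory Defs
  imports Main Complex_Main
begin

text \<open>An element A of F_k^5 is represented as a function of five natural-number
arguments; only its values on tuples with coordinate sum k matter.\<close>

end

theory Submission
  imports Defs
begin

theorem lemma4p1:
  fixes n :: int and k :: nat
    and A :: "nat \<Rightarrow> nat \<Rightarrow> nat \<Rightarrow> nat \<Rightarrow> nat \<Rightarrow> real"
  assumes nk: "n > 2 * int k"
    and h1: "\<And>a1 a2 a3 a4 a5. a1 + a2 + a3 + a4 + a5 + 1 = k \<Longrightarrow>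
       (real_of_int n + 2 * real k - 4 * real a3 - 4) * A a1 a2 (a3 + 1) a4 a5
     = (real_of_int n + 2 * real k - 4 * real a4 - 4) * A a1 a2 a3 (a4 + 1) a5"
    and h2: "\<And>a1 a2 a3 a4 a5. a1 + a2 + a3 + a4 + a5 + 1 = k \<Longrightarrow>
       (real_of_int n + 2 * real k - 4 * real a5 - 4) * A a1 a2 a3 a4 (a5 + 1)
     = (real_of_int n + 2 * real k - 4 * real a1 - 4) * A (a1 + 1) a2 a3 a4 a5"
    and h3: "\<And>a1 a2 a3 a4 a5. a1 + a2 + a3 + a4 + a5 + 1 = k \<Longrightarrow>
       (real_of_int n + 2 * real k - 4 * real a3 - 4) * A a1 a2 (a3 + 1) a4 a5
     = (real_of_int n + 2 * real k - 4 * real a1 - 4) * A (a1 + 1) a2 a3 a4 a5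
       - 4 * (real a1 - real a3 - real a4 + real a5) * A a1 (a2 + 1) a3 a4 a5"
  shows "\<forall>a1 a2 a3 a4 a5. a1 + a2 + a3 + a4 + a5 = k \<longrightarrow>
           A a1 a2 a3 a4 a5 = A a1 a2 a4 a3 a5 \<and>
           A a1 a2 a3 a4 a5 = A a5 a2 a3 a4 a1 \<and>
           A a1 a2 a3 a4 a5 = A a3 a2 a1 a5 a4"
proof -
  define N where "N = real_of_int n + 2 * real k"
  define c where "c = (\<lambda>i::nat. N - 4 * real i - 4)"
  define P where "P = (\<lambda>m::nat. \<Prod>i<m. c i)"
  define B where "B = (\<lambda>a1 a2 a3 a4 a5. A a1 a2 a3 a4 a5 * (P a1 * P a2 * P a3 * P a4 * P a5))"
  have PS: "P (Suc m) = P m * c m" for m by (simp add: P_def)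
  have cpos: "c i > 0" if "i < k" for i
  proof -
    have "real i + 1 \<le> real k" using that by simp
    moreover have "real_of_int n > 2 * real k" using nk by linarith
    ultimately show ?thesis unfolding c_def N_def by linarith
  qed
  have Ppos: "P m > 0" if "m \<le> k" for m
    unfolding P_def using that by (intro prod_pos) (auto intro: cpos)
  have h1': "B a1 a2 (a3 + 1) a4 a5 = B a1 a2 a3 (a4 + 1) a5"
    if "a1 + a2 + a3 + a4 + a5 + 1 = k" for a1 a2 a3 a4 a5
  proof -
    have "B a1 a2 (a3 + 1) a4 a5 = (c a3 * A a1 a2 (a3 + 1) a4 a5) * (P a1 * P a2 * P a3 * P a4 * P a5)"
      by (simp add: B_def PS)
    also have "c a3 * A a1 a2 (a3 + 1) a4 a5 = c a4 * A a1 a2 a3 (a4 + 1) a5"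
      using h1[OF that] by (simp add: c_def N_def)
    finally show ?thesis by (simp add: B_def PS mult.commute)
  qed
  have h2': "B a1 a2 a3 a4 (a5 + 1) = B (a1 + 1) a2 a3 a4 a5"
    if "a1 + a2 + a3 + a4 + a5 + 1 = k" for a1 a2 a3 a4 a5
  proof -
    have "B a1 a2 a3 a4 (a5 + 1) = (c a5 * A a1 a2 a3 a4 (a5 + 1)) * (P a1 * P a2 * P a3 * P a4 * P a5)"
      by (simp add: B_def PS)
    also have "c a5 * A a1 a2 a3 a4 (a5 + 1) = c a1 * A (a1 + 1) a2 a3 a4 a5"
      using h2[OF that] by (simp add: c_def N_def)
    finally show ?thesis by (simp add: B_def PS mult.commute)
  qed
  have h3': "c a2 * B a1 a2 (a3 + 1) a4 a5 = c a2 * B (a1 + 1) a2 a3 a4 a5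
       - 4 * (real a1 - real a3 - real a4 + real a5) * B a1 (a2 + 1) a3 a4 a5"
    if "a1 + a2 + a3 + a4 + a5 + 1 = k" for a1 a2 a3 a4 a5
  proof -
    let ?Q = "P a1 * P a2 * P a3 * P a4 * P a5"
    have e: "c a3 * A a1 a2 (a3 + 1) a4 a5 = c a1 * A (a1 + 1) a2 a3 a4 a5
       - 4 * (real a1 - real a3 - real a4 + real a5) * A a1 (a2 + 1) a3 a4 a5"
      using h3[OF that] by (simp add: c_def N_def)
    have "c a2 * B a1 a2 (a3 + 1) a4 a5 = c a2 * ((c a3 * A a1 a2 (a3 + 1) a4 a5) * ?Q)"
      by (simp add: B_def PS algebra_simps)
    also have "\<dots> = c a2 * ((c a1 * A (a1 + 1) a2 a3 a4 a5
       - 4 * (real a1 - real a3 - real a4 + real a5) * A a1 (a2 + 1) a3 a4 a5) * ?Q)"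
      by (simp only: e)
    also have "\<dots> = c a2 * B (a1 + 1) a2 a3 a4 a5
       - 4 * (real a1 - real a3 - real a4 + real a5) * B a1 (a2 + 1) a3 a4 a5"
      by (simp add: B_def PS algebra_simps)
    finally show ?thesis .
  qed
  have S1: "B a1 a2 a3 a4 a5 = B a1 a2 0 (a3 + a4) a5"
    if "a1 + a2 + a3 + a4 + a5 = k" for a1 a2 a3 a4 a5
    using that
  proof (induction a3 arbitrary: a4)
    case 0 then show ?case by simp
  next
    case (Suc a3)
    have "B a1 a2 (Suc a3) a4 a5 = B a1 a2 a3 (a4 + 1) a5"
      using h1'[of a1 a2 a3 a4 a5] Suc.prems by simp
    also have "\<dots> = B a1 a2 0 (a3 + (a4 + 1)) a5" using Suc.IH[of "a4 + 1"] Suc.prems by simp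
    finally show ?case by simp
  qed
  have S2: "B a1 a2 a3 a4 a5 = B 0 a2 a3 a4 (a1 + a5)"
    if "a1 + a2 + a3 + a4 + a5 = k" for a1 a2 a3 a4 a5
    using that
  proof (induction a1 arbitrary: a5)
    case 0 then show ?case by simp
  next
    case (Suc a1)
    have "B (Suc a1) a2 a3 a4 a5 = B a1 a2 a3 a4 (a5 + 1)"
      using h2'[of a1 a2 a3 a4 a5] Suc.prems by simp
    also have "\<dots> = B 0 a2 a3 a4 (a1 + (a5 + 1))" using Suc.IH[of "a5 + 1"] Suc.prems by simp
    finally show ?case by simp
  qed
  define E where "E = (\<lambda>s b t. B 0 b 0 t s)"
  have SE: "B a1 a2 a3 a4 a5 = E (a1 + a5) a2 (a3 + a4)"
    if "a1 + a2 + a3 + a4 + a5 = k" for a1 a2 a3 a4 a5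
    using S1[OF that] S2[of a1 a2 0 "a3 + a4" a5] that by (simp add: E_def)
  have key: "\<forall>s t. s + t = m \<longrightarrow> E s (k - m) t = E t (k - m) s" if "m \<le> k" for m
    using that
  proof (induction m)
    case 0 then show ?case by simp
  next
    case (Suc m)
    define b where "b = k - Suc m"
    have kb: "k - m = b + 1" using Suc.prems by (simp add: b_def)
    have cb: "c b > 0" using Suc.prems by (intro cpos) (simp add: b_def)
    have step: "E s b (t + 1) - E (t + 1) b s = E (s + 1) b t - E t b (s + 1)"
      if st: "s + t = m" for s t
    proof -
      have X: "E s (b + 1) t = E t (b + 1) s" using Suc.IH Suc.prems st kb by auto
      have q1: "c b * B s b (t + 1) 0 0 = c b * B (s + 1) b t 0 0
         - 4 * (real s - real t - real 0 + real 0) * B s (b + 1) t 0 0"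
        using h3'[of s b t 0 0] st Suc.prems by (simp add: b_def)
      have q2: "c b * B t b (s + 1) 0 0 = c b * B (t + 1) b s 0 0
         - 4 * (real t - real s - real 0 + real 0) * B t (b + 1) s 0 0"
        using h3'[of t b s 0 0] st Suc.prems by (simp add: b_def)
      have sk: "s + b + t + 1 = k" using st Suc.prems by (simp add: b_def)
      have r1: "B s b (t + 1) 0 0 = E s b (t + 1)" using SE[of s b "t+1" 0 0] sk by simp
      have r2: "B (s + 1) b t 0 0 = E (s + 1) b t" using SE[of "s+1" b t 0 0] sk by simp
      have r3: "B s (b + 1) t 0 0 = E s (b + 1) t" using SE[of s "b+1" t 0 0] sk by simp
      have r4: "B t b (s + 1) 0 0 = E t b (s + 1)" using SE[of t b "s+1" 0 0] sk by simp
      have r5: "B (t + 1) b s 0 0 = E (t + 1) b s" using SE[of "t+1" b s 0 0] sk by simp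
      have r6: "B t (b + 1) s 0 0 = E t (b + 1) s" using SE[of t "b+1" s 0 0] sk by simp
      have "c b * (E s b (t + 1) - E (t + 1) b s) = c b * (E (s + 1) b t - E t b (s + 1))"
        using q1 q2 X unfolding r1 r2 r3 r4 r5 r6 by (simp add: algebra_simps)
      then show ?thesis using cb by simp
    qed
    have chain: "E x b (Suc m - x) - E (Suc m - x) b x = E 0 b (Suc m) - E (Suc m) b 0"
      if "x \<le> Suc m" for x
      using that
    proof (induction x)
      case 0 then show ?case by simp
    next
      case (Suc x)
      have "E (Suc x) b (Suc m - Suc x) - E (Suc m - Suc x) b (Suc x)
          = E x b (Suc m - x) - E (Suc m - x) b x"
        using step[of x "m - x"] Suc.prems
        by (simp add: Suc_diff_le)
      then show ?case using Suc by simp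
    qed
    have z: "E 0 b (Suc m) = E (Suc m) b 0" using chain[of "Suc m"] by simp
    show ?case
    proof (intro allI impI)
      fix s t assume st: "s + t = Suc m"
      then have "t = Suc m - s" "s \<le> Suc m" by auto
      then show "E s (k - Suc m) t = E t (k - Suc m) s"
        using chain[of s] z by (simp add: b_def[symmetric])
    qed
  qed
  show ?thesis
  proof (intro allI impI)
    fix a1 a2 a3 a4 a5 :: nat
    assume sum: "a1 + a2 + a3 + a4 + a5 = k"
    let ?Q = "P a1 * P a2 * P a3 * P a4 * P a5"
    have Qpos: "?Q > 0" using sum by (intro mult_pos_pos Ppos) auto
    have AB: "A x1 x2 x3 x4 x5 = B x1 x2 x3 x4 x5 / ?Q"
      if "P x1 * P x2 * P x3 * P x4 * P x5 = ?Q" for x1 x2 x3 x4 x5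
    proof -
      have "B x1 x2 x3 x4 x5 = A x1 x2 x3 x4 x5 * ?Q" using that by (simp add: B_def)
      moreover have "?Q \<noteq> 0" using Qpos by linarith
      ultimately show ?thesis by (metis nonzero_mult_div_cancel_right)
    qed
    have b1: "B a1 a2 a3 a4 a5 = E (a1 + a5) a2 (a3 + a4)" using SE sum by simp
    have b2: "B a1 a2 a4 a3 a5 = E (a1 + a5) a2 (a3 + a4)" using SE[of a1 a2 a4 a3 a5] sum by (simp add: add.commute add.left_commute)
    have b3: "B a5 a2 a3 a4 a1 = E (a1 + a5) a2 (a3 + a4)" using SE[of a5 a2 a3 a4 a1] sum by (simp add: add.commute add.left_commute)
    have b4: "B a3 a2 a1 a5 a4 = E (a3 + a4) a2 (a1 + a5)" using SE[of a3 a2 a1 a5 a4] sum by (simp add: add.commute add.left_commute)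
    have sym: "E (a3 + a4) a2 (a1 + a5) = E (a1 + a5) a2 (a3 + a4)"
      using key[of "k - a2"] sum by auto
    show "A a1 a2 a3 a4 a5 = A a1 a2 a4 a3 a5 \<and>
           A a1 a2 a3 a4 a5 = A a5 a2 a3 a4 a1 \<and>
           A a1 a2 a3 a4 a5 = A a3 a2 a1 a5 a4"
      using AB[of a1 a2 a3 a4 a5] AB[of a1 a2 a4 a3 a5] AB[of a5 a2 a3 a4 a1] AB[of a3 a2 a1 a5 a4]
        b1 b2 b3 b4 sym by (simp add: algebra_simps)
  qed
qed

end
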